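(* Let $n_1<n_2$ be positive integers with $\gcd(n_1,n_2)=1$, and let $N=2(n_1+n_2)$. Then $C(n_1,n_2,n_1+n_2)$ is a circle of $n_1+n_2$ tetrahedra boundaries. Explicitly, for each $a\in\mathbb{Z}/N$ the edge (tritone) $\{a,a+n_1+n_2\}$ lies in exactly four 2-simplices, which are contained in exactly the two tetrahedron boundaries on the vertex sets $\{a,a+n_1,a+n_1+n_2,a+2n_1+n_2\}$ and $\{a,a+n_2,a+n_1+n_2,a+n_1+2n_2\}$; these two tetrahedron boundaries intersect exactly in that edge, every 2-simplex lies in exactly one such tetrahedron boundary, and these tetrahedron boundaries are linked cyclically, each sharing opposite edges with its two neighbours.
   Context: For positive integers $n_1\le n_2\le n_3$ with $N=n_1+n_2+n_3$, $C(n_1,n_2,n_3)$ denotes the abstract simplicial complex whose vertex set is $\mathbb{Z}/N$, whose 2-simplices are all sets of the form $\{k,k+n_1,k+n_1+n_2\}$ or $\{k,k-n_1,k-n_1-n_2\}$ for $k\in\mathbb{Z}/N$, and whose 1-simplices are all sets $\{k,k+n_i\}$ with $k\in\mathbb{Z}/N$, $i\in\{1,2,3\}$. A tetrahedron boundary is the simplicial complex of all nonempty subsets of size at most 3 of a 4-element set. A circle of $m\ge 3$ tetrahedra boundaries is a simplicial complex that is a union of $m$ tetrahedron boundaries $T_0,\dots,T_{m-1}$ (indices mod $m$) such that $T_i\cap T_{i+1}$ is a single edge (with its vertices), the two edges $T_i\cap T_{i-1}$ and $T_i\cap T_{i+1}$ are opposite (disjoint) edges of $T_i$, and non-consecutive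 $T_i,T_j$ are disjoint. *)

theory Defs
  imports Main
begin

text \<open>Vertices of Z/N are represented by the integers 0..N-1, arithmetic taken mod N.
  A simplicial complex is represented by its set of (nonempty) faces.\<close>

definition cplx :: "nat \<Rightarrow> nat \<Rightarrow> nat \<Rightarrow> int set set" where
  "cplx n1 n2 n3 = (let N = int (n1 + n2 + n3) in
      {{k} | k. 0 \<le> k \<and> k < N}
    \<union> {{k, (k + int n) mod N} | k n. 0 \<le> k \<and> k < N \<and> n \<in> {n1, n2, n3}}
    \<union> {{k, (k + int n1) mod N, (k + int n1 + int n2) mod N} | k. 0 \<le> k \<and> k < N}
    \<union> {{k, (k - int n1) mod N, (k - int n1 - int n2) mod N} | k. 0 \<le> k \<and> k < N})"

definition tetra_faces :: "'a set \<Rightarrow> 'a set set" where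
  "tetra_faces V = {s. s \<subseteq> V \<and> s \<noteq> {} \<and> card s \<le> 3}"

definition is_tetra_boundary :: "'a set set \<Rightarrow> bool" where
  "is_tetra_boundary K \<longleftrightarrow> (\<exists>V. finite V \<and> card V = 4 \<and> K = tetra_faces V)"

definition edge_faces :: "'a set \<Rightarrow> 'a set set" where
  "edge_faces e = {s. s \<subseteq> e \<and> s \<noteq> {}}"

definition circle_of_tetra_on :: "'a set set \<Rightarrow> nat \<Rightarrow> (nat \<Rightarrow> 'a set set) \<Rightarrow> bool" where
  "circle_of_tetra_on K m T \<longleftrightarrow>
     m \<ge> 3 \<and> K = (\<Union>i<m. T i) \<and> (\<forall>i<m. is_tetra_boundary (T i)) \<and>
     (\<exists>E :: nat \<Rightarrow> 'a set.
        (\<forall>i<m. finite (E i) \<and> card (E i) = 2 \<and> T i \<inter> T ((i + 1) mod m) = edge_faces (E i)) \<and>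
        (\<forall>i<m. E i \<inter> E ((i + m - 1) mod m) = {})) \<and>
     (\<forall>i<m. \<forall>j<m. i \<noteq> j \<and> j \<noteq> (i + 1) mod m \<and> i \<noteq> (j + 1) mod m \<longrightarrow> T i \<inter> T j = {})"

definition circle_of_tetra :: "'a set set \<Rightarrow> nat \<Rightarrow> bool" where
  "circle_of_tetra K m \<longleftrightarrow> (\<exists>T. circle_of_tetra_on K m T)"

end

theory Submission
  imports Defs
begin

lemma tf_Int: "tetra_faces A \<inter> tetra_faces B = tetra_faces (A \<inter> B)"
  by (auto simp: tetra_faces_def)

lemma tf_empty: "tetra_faces {} = {}"
  by (auto simp: tetra_faces_def)

lemma tf_edge: "finite e \<Longrightarrow> card e = 2 \<Longrightarrow> tetra_faces e = edge_faces e"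
  unfolding tetra_faces_def edge_faces_def
  by (metis (lifting) card_mono numeral_le_iff semiring_norm(72) order_trans
      semiring_norm(69) numeral_One one_le_numeral)

lemma is_tb: "finite V \<Longrightarrow> card V = 4 \<Longrightarrow> is_tetra_boundary (tetra_faces V)"
  unfolding is_tetra_boundary_def by blast

lemma card3: "card {a, b, c} \<le> 3"
  by (simp add: card_insert_if)

lemma subsets4:
  assumes "s \<subseteq> {a, b, c, d}" "s \<noteq> {}" "s \<noteq> {a, b, c, d}"
    and "P {a}" "P {b}" "P {c}" "P {d}"
    and "P {a, b}" "P {a, c}" "P {a, d}" "P {b, c}" "P {b, d}" "P {c, d}"
    and "P {a, b, c}" "P {a, b, d}" "P {a, c, d}" "P {b, c, d}"
  shows "P s"
proof -
  have e: "s = (if a \<in> s then {a} else {}) \<union> (if b \<in> s then {b} else {}) \<union>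
     (if c \<in> s then {c} else {}) \<union> (if d \<in> s then {d} else {})" using assms(1) by auto
  show ?thesis
    apply (cases "a \<in> s"; cases "b \<in> s"; cases "c \<in> s"; cases "d \<in> s")
    using assms e by (simp_all add: insert_commute)
qed

locale L =
  fixes n1 n2 :: nat
  assumes pos: "0 < n1" and lt: "n1 < n2" and cop: "gcd n1 n2 = 1"
begin

definition "M = int n1 + int n2"
definition "NN = 2 * M"
definition "P y = {x. 0 \<le> x \<and> x < NN \<and> x mod M = y mod M}"
definition "Q b = P b \<union> P (b + int n1)"

lemma M_pos: "M > 0" and n1_lt: "int n1 < M" and n1_pos: "int n1 > 0" and NN_pos: "NN > 0"
  using pos lt by (auto simp: M_def NN_def)

lemma NN_mod: "x mod NN mod M = x mod M"
  by (simp add: NN_def mod_mod_cancel)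

lemma not_dvd_n1: "\<not> M dvd int n1"
  using n1_pos n1_lt zdvd_imp_le by fastforce

lemma not_dvd_2n1: "\<not> M dvd 2 * int n1"
proof
  assume "M dvd 2 * int n1"
  then obtain t where t: "2 * int n1 = M * t" by (auto simp: dvd_def)
  have "t > 0" using t M_pos n1_pos by (metis zero_less_mult_pos mult_pos_pos zero_less_numeral)
  moreover have "t < 2"
  proof (rule ccontr)
    assume "\<not> t < 2"
    hence "M * 2 \<le> M * t" using M_pos by (intro mult_left_mono) auto
    thus False using t n1_lt by linarith
  qed
  ultimately have "t = 1" by simp
  with t lt show False by (simp add: M_def)
qed

lemma R1: "(b + int n1) mod M \<noteq> b mod M"
  using not_dvd_n1 by (simp add: mod_eq_dvd_iff)

lemma R2: "(b + 2 * int n1) mod M \<noteq> b mod M"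
  using not_dvd_2n1 by (simp add: mod_eq_dvd_iff)

lemma coprime_M: "coprime M (int n1)"
proof -
  have "gcd (int n1) M = gcd (int n1) (int n2)" by (simp add: M_def gcd_add2)
  also have "\<dots> = 1" using cop by (metis gcd_int_int_eq of_nat_1)
  finally show ?thesis by (simp add: coprime_iff_gcd_eq_1 gcd.commute)
qed

lemma P_eq: "P y = {y mod NN, (y + M) mod NN}"
proof (intro set_eqI iffI)
  fix x assume "x \<in> P y"
  hence x: "0 \<le> x" "x < NN" "x mod M = y mod M" by (auto simp: P_def)
  then obtain t where t: "x - y = M * t" using mod_eq_dvd_iff by (metis dvd_def)
  consider u where "t = 2 * u" | u where "t = 2 * u + 1" by (metis oddE evenE)
  then show "x \<in> {y mod NN, (y + M) mod NN}"
  proof cases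
    case 1
    hence "NN dvd x - y" using t by (simp add: NN_def)
    hence "x mod NN = y mod NN" by (simp add: mod_eq_dvd_iff)
    thus ?thesis using x by simp
  next
    case 2
    hence "x - (y + M) = NN * u" using t by (simp add: NN_def algebra_simps)
    hence "NN dvd x - (y + M)" by simp
    hence "x mod NN = (y + M) mod NN" by (simp add: mod_eq_dvd_iff)
    thus ?thesis using x by simp
  qed
next
  fix x assume "x \<in> {y mod NN, (y + M) mod NN}"
  moreover have "(y + M) mod NN mod M = y mod M" by (simp add: NN_mod)
  ultimately show "x \<in> P y" using NN_pos NN_mod[of y] by (auto simp: P_def)
qed

lemma P_card: "finite (P y)" "card (P y) = 2"
proof -
  show "finite (P y)" by (simp add: P_eq)
  have "(y + M) mod NN \<noteq> y mod NN"
  proof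
    assume "(y + M) mod NN = y mod NN"
    hence "NN dvd M" by (simp add: mod_eq_dvd_iff)
    thus False using M_pos zdvd_imp_le by (fastforce simp: NN_def)
  qed
  thus "card (P y) = 2" by (simp add: P_eq)
qed

lemma P_cong: "y mod M = z mod M \<Longrightarrow> P y = P z" by (simp add: P_def)

lemma P_disj: "y mod M \<noteq> z mod M \<Longrightarrow> P y \<inter> P z = {}" by (auto simp: P_def)

lemma Q_cong: "y mod M = z mod M \<Longrightarrow> Q y = Q z"
  unfolding Q_def by (metis P_cong mod_add_cong)

lemma Q_eq: "Q b = {b mod NN, (b + int n1) mod NN, (b + M) mod NN, (b + M + int n1) mod NN}"
proof -
  have "b + int n1 + M = b + M + int n1" by simp
  then show ?thesis unfolding Q_def P_eq by (simp only: insert_commute) blast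
qed

lemma Q_card: "finite (Q b)" "card (Q b) = 4"
proof -
  show "finite (Q b)" by (simp add: Q_def P_card)
  have "P b \<inter> P (b + int n1) = {}" using R1 P_disj by metis
  thus "card (Q b) = 4" by (simp add: Q_def card_Un_disjoint P_card)
qed

lemma mem_P: "x \<in> P y \<longleftrightarrow> 0 \<le> x \<and> x < NN \<and> x mod M = y mod M" by (simp add: P_def)

lemma Q_int_next: "Q b \<inter> Q (b + int n1) = P (b + int n1)"
proof -
  have "(b + int n1 + int n1) mod M \<noteq> b mod M" using R2[of b] by (simp add: add.assoc)
  thus ?thesis using R1[of b] R1[of "b + int n1"] by (auto simp: Q_def mem_P)
qed

lemma P_sub_Q: "P a \<subseteq> Q c \<Longrightarrow> a mod M = c mod M \<or> a mod M = (c + int n1) mod M"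
proof -
  assume "P a \<subseteq> Q c"
  moreover have "a mod NN \<in> P a" by (simp add: P_eq)
  ultimately have "a mod NN \<in> Q c" by blast
  thus ?thesis by (auto simp: Q_def mem_P NN_mod)
qed

lemma Q_int_small: "b mod M \<noteq> c mod M \<Longrightarrow> \<exists>r. Q b \<inter> Q c \<subseteq> P r"
proof -
  assume ne: "b mod M \<noteq> c mod M"
  show ?thesis
  proof (cases "b mod M = (c + int n1) mod M")
    case True
    have "Q b \<inter> Q c \<subseteq> P b"
    proof -
      have "(b + int n1) mod M = (c + int n1 + int n1) mod M" using True by (metis mod_add_cong)
      moreover have "(c + int n1 + int n1) mod M \<noteq> c mod M" using R2[of c] by (simp add: add.assoc)
      ultimately show ?thesis using ne True R1[of b] by (auto simp: Q_def mem_P)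
    qed
    thus ?thesis by blast
  next
    case False
    have "Q b \<inter> Q c \<subseteq> P (b + int n1)"
      using ne False by (auto simp: Q_def mem_P)
    thus ?thesis by blast
  qed
qed


abbreviation "KK \<equiv> cplx n1 n2 (n1 + n2)"

lemma NN_int: "int (n1 + n2 + (n1 + n2)) = NN" by (simp add: NN_def M_def)

lemma K_mem: "\<sigma> \<in> KK \<longleftrightarrow> (\<exists>k. 0 \<le> k \<and> k < NN \<and> (\<sigma> = {k} \<or>
   (\<exists>n\<in>{n1, n2, n1 + n2}. \<sigma> = {k, (k + int n) mod NN}) \<or>
   \<sigma> = {k, (k + int n1) mod NN, (k + int n1 + int n2) mod NN} \<or>
   \<sigma> = {k, (k - int n1) mod NN, (k - int n1 - int n2) mod NN}))"
  unfolding cplx_def Let_def NN_int by blast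

lemma modr: "0 \<le> b mod NN" "b mod NN < NN" using NN_pos by auto

lemma sing_mem: "{b mod NN} \<in> KK"
  unfolding K_mem using modr by blast

lemma edge_mem: "n \<in> {n1, n2, n1 + n2} \<Longrightarrow> {b mod NN, (b + int n) mod NN} \<in> KK"
  unfolding K_mem using modr[of b] by (intro exI[of _ "b mod NN"]) (auto simp: mod_add_left_eq)

lemma tri1_mem: "{b mod NN, (b + int n1) mod NN, (b + int n1 + int n2) mod NN} \<in> KK"
  unfolding K_mem using modr[of b]
  by (intro exI[of _ "b mod NN"]) (simp add: mod_add_left_eq add.assoc)

lemma tri2_mem: "{b mod NN, (b - int n1) mod NN, (b - int n1 - int n2) mod NN} \<in> KK"
  unfolding K_mem using modr[of b]
  by (intro exI[of _ "b mod NN"]) (simp add: mod_diff_left_eq diff_diff_eq)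

lemma modNN: "x = y + NN \<Longrightarrow> x mod NN = y mod NN" by simp

lemma tf_Q_K: "tetra_faces (Q b) \<subseteq> KK"
proof
  fix s assume s: "s \<in> tetra_faces (Q b)"
  define e0 where "e0 = b mod NN"
  define e1 where "e1 = (b + int n1) mod NN"
  define e2 where "e2 = (b + M) mod NN"
  define e3 where "e3 = (b + M + int n1) mod NN"
  have Qe: "Q b = {e0, e1, e2, e3}" by (simp add: Q_eq e0_def e1_def e2_def e3_def)
  have s1: "s \<subseteq> {e0, e1, e2, e3}" "s \<noteq> {}" "card s \<le> 3"
    using s by (auto simp: tetra_faces_def Qe)
  have s2: "s \<noteq> {e0, e1, e2, e3}" using s1(3) Q_card(2)[of b] Qe by auto
  have Mi: "int (n1 + n2) = M" by (simp add: M_def)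
  have a1: "{e0, e1} \<in> KK" unfolding e0_def e1_def by (rule edge_mem) simp
  have a2: "{e0, e2} \<in> KK" unfolding e0_def e2_def using edge_mem[of "n1 + n2" b] Mi by simp
  have a3: "{e0, e3} \<in> KK"
  proof -
    have "(b + M + int n1 + int n2) mod NN = e0" unfolding e0_def
      by (rule modNN) (simp add: NN_def M_def)
    hence "{e3, e0} \<in> KK" using edge_mem[of n2 "b + M + int n1"] e3_def by simp
    thus ?thesis by (simp add: insert_commute)
  qed
  have a4: "{e1, e2} \<in> KK"
  proof -
    have eq: "b + int n1 + int n2 = b + M" by (simp add: M_def)
    show ?thesis using edge_mem[of n2 "b + int n1"] by (simp only: e1_def e2_def eq) simp
  qed
  have a5: "{e1, e3} \<in> KK"
  proof -
    have eq: "b + int n1 + int (n1 + n2) = b + M + int n1" by (simp add: M_def)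
    show ?thesis using edge_mem[of "n1 + n2" "b + int n1"] by (simp only: e1_def e3_def eq) simp
  qed
  have a6: "{e2, e3} \<in> KK" using edge_mem[of n1 "b + M"] e2_def e3_def by simp
  have t1: "{e0, e1, e2} \<in> KK"
  proof -
    have eq: "b + int n1 + int n2 = b + M" by (simp add: M_def)
    show ?thesis using tri1_mem[of b] by (simp only: e0_def e1_def e2_def eq)
  qed
  have t2: "{e0, e2, e3} \<in> KK"
  proof -
    have "(b + M + int n1 + int n2) mod NN = e0" unfolding e0_def
      by (rule modNN) (simp add: NN_def M_def)
    hence "{e2, e3, e0} \<in> KK" using tri1_mem[of "b + M"] e2_def e3_def by simp
    thus ?thesis by (simp add: insert_commute)
  qed
  have t3: "{e0, e1, e3} \<in> KK"
  proof -
    have "(b + int n1 - int n1 - int n2) mod NN = e3" unfolding e3_def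
      by (rule sym, rule modNN) (simp add: NN_def M_def)
    hence "{e1, e0, e3} \<in> KK" using tri2_mem[of "b + int n1"] e0_def e1_def by simp
    thus ?thesis by (simp add: insert_commute)
  qed
  have t4: "{e1, e2, e3} \<in> KK"
  proof -
    have eq: "b + M + int n1 - int n1 - int n2 = b + int n1" and eq2: "b + M + int n1 - int n1 = b + M" and eq3: "b + M - int n2 = b + int n1" by (simp_all add: M_def)
    have "{e3, e2, e1} \<in> KK" using tri2_mem[of "b + M + int n1"] by (simp only: e1_def e2_def e3_def eq eq2 eq3)
    thus ?thesis by (simp add: insert_commute)
  qed
  show "s \<in> KK"
    by (rule subsets4[OF s1(1,2) s2]; (rule sing_mem[of b, folded e0_def] sing_mem[of "b + int n1", folded e1_def]
        sing_mem[of "b + M", folded e2_def] sing_mem[of "b + M + int n1", folded e3_def])?;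
        (simp add: a1 a2 a3 a4 a5 a6 t1 t2 t3 t4 insert_commute)?)
qed


lemma tfI: "\<sigma> \<subseteq> Q b \<Longrightarrow> \<sigma> \<noteq> {} \<Longrightarrow> card \<sigma> \<le> 3 \<Longrightarrow> \<sigma> \<in> tetra_faces (Q b)"
  by (simp add: tetra_faces_def)

lemma K_sub: "\<sigma> \<in> KK \<Longrightarrow> \<exists>b. \<sigma> \<in> tetra_faces (Q b)"
proof -
  assume "\<sigma> \<in> KK"
  then obtain k where k: "0 \<le> k" "k < NN" and cs: "\<sigma> = {k} \<or>
   (\<exists>n\<in>{n1, n2, n1 + n2}. \<sigma> = {k, (k + int n) mod NN}) \<or>
   \<sigma> = {k, (k + int n1) mod NN, (k + int n1 + int n2) mod NN} \<or>
   \<sigma> = {k, (k - int n1) mod NN, (k - int n1 - int n2) mod NN}" unfolding K_mem by blast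
  have kk: "k mod NN = k" using k by simp
  have c3: "card \<sigma> \<le> 3" using cs by (auto simp: card_insert_if)
  have ne: "\<sigma> \<noteq> {}" using cs by auto
  have Qk: "Q k = {k, (k + int n1) mod NN, (k + M) mod NN, (k + M + int n1) mod NN}"
    using Q_eq[of k] kk by simp
  have Qk1: "Q (k - int n1) = {(k - int n1) mod NN, k, (k + int n2) mod NN, (k - int n1 - int n2) mod NN}"
  proof -
    have d: "(k + int n2 + int n1) mod NN = (k - int n1 - int n2) mod NN"
      by (rule modNN) (simp add: NN_def M_def)
    have b: "k - int n1 + M = k + int n2" and c: "k - int n1 + int n1 = k" by (simp_all add: M_def)
    show ?thesis using Q_eq[of "k - int n1"] by (simp only: b c d kk)
  qed
  have "\<sigma> \<subseteq> Q k \<or> \<sigma> \<subseteq> Q (k - int n1)"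
  proof -
    have e1: "int (n1 + n2) = M" "k + int n1 + int n2 = k + M" "k + (int n1 + int n2) = k + M" by (simp_all add: M_def)
    from cs show ?thesis
      by (elim disjE bexE) (auto simp: Qk Qk1 e1)
  qed
  thus ?thesis using tfI ne c3 by blast
qed


lemma Mnat: "M = int (n1 + n2)" by (simp add: M_def)

lemma surj_res: "\<exists>i<n1 + n2. b mod M = (int i * int n1) mod M"
proof -
  obtain u v where uv: "u * int n1 + v * M = gcd (int n1) M" using bezout_int by blast
  have g: "gcd (int n1) M = 1" using coprime_M by (simp add: coprime_iff_gcd_eq_1 gcd.commute)
  define i where "i = nat ((b * u) mod M)"
  have ii: "int i = (b * u) mod M" unfolding i_def using M_pos by simp
  have "int i < M" using ii M_pos by simp
  hence "i < n1 + n2" by (simp add: Mnat)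
  moreover have "(int i * int n1) mod M = b mod M"
  proof -
    have "(int i * int n1) mod M = (b * u * int n1) mod M" unfolding ii by (simp add: mod_mult_left_eq)
    also have "b * u * int n1 = b + (- b * v) * M"
    proof -
      have "u * int n1 = 1 - v * M" using uv g by simp
      hence "b * u * int n1 = b * (1 - v * M)" by (simp add: mult.assoc)
      thus ?thesis by (simp add: algebra_simps)
    qed
    also have "(b + (- b * v) * M) mod M = b mod M" by (rule mod_mult_self1)
    finally show ?thesis .
  qed
  ultimately show ?thesis by metis
qed

lemma Q_range: "range Q = (\<lambda>i. Q (int i * int n1)) ` {..<n1 + n2}"
proof
  show "range Q \<subseteq> (\<lambda>i. Q (int i * int n1)) ` {..<n1 + n2}"
  proof
    fix V assume "V \<in> range Q"
    then obtain b where b: "V = Q b" by blast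
    obtain i where "i < n1 + n2" "b mod M = (int i * int n1) mod M" using surj_res by blast
    thus "V \<in> (\<lambda>i. Q (int i * int n1)) ` {..<n1 + n2}" using b Q_cong by blast
  qed
qed blast

lemma K_union: "KK = (\<Union>b. tetra_faces (Q b))"
proof
  show "KK \<subseteq> (\<Union>b. tetra_faces (Q b))" using K_sub by blast
  show "(\<Union>b. tetra_faces (Q b)) \<subseteq> KK" using tf_Q_K by blast
qed

lemma tri_char: "(\<sigma> \<in> KK \<and> card \<sigma> = 3) \<longleftrightarrow> (card \<sigma> = 3 \<and> (\<exists>c. \<sigma> \<subseteq> Q c))"
proof
  assume "\<sigma> \<in> KK \<and> card \<sigma> = 3" thus "card \<sigma> = 3 \<and> (\<exists>c. \<sigma> \<subseteq> Q c)"
    using K_sub by (auto simp: tetra_faces_def)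
next
  assume a: "card \<sigma> = 3 \<and> (\<exists>c. \<sigma> \<subseteq> Q c)"
  then obtain c where "\<sigma> \<subseteq> Q c" by blast
  moreover have "\<sigma> \<noteq> {}" using a by auto
  ultimately have "\<sigma> \<in> tetra_faces (Q c)" using a tfI by simp
  thus "\<sigma> \<in> KK \<and> card \<sigma> = 3" using tf_Q_K a by blast
qed

lemma uniq: "\<sigma> \<in> KK \<Longrightarrow> card \<sigma> = 3 \<Longrightarrow> \<exists>!V. V \<in> range Q \<and> \<sigma> \<subseteq> V"
proof -
  assume s: "\<sigma> \<in> KK" "card \<sigma> = 3"
  then obtain b where b: "\<sigma> \<subseteq> Q b" using tri_char by blast
  have "Q c = Q b" if c: "\<sigma> \<subseteq> Q c" for c
  proof (rule ccontr)
    assume ne: "Q c \<noteq> Q b"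
    hence "c mod M \<noteq> b mod M" using Q_cong by blast
    then obtain r where "Q c \<inter> Q b \<subseteq> P r" using Q_int_small by blast
    hence "\<sigma> \<subseteq> P r" using b c by blast
    hence "card \<sigma> \<le> 2" using P_card[of r] card_mono by metis
    thus False using s by simp
  qed
  thus ?thesis using b by blast
qed

lemma mod_nat_res: "int (x mod (n1 + n2)) mod M = int x mod M"
  by (simp add: Mnat zmod_int)

lemma nonadj:
  assumes "i < n1 + n2" "j < n1 + n2" "i \<noteq> j" "j \<noteq> (i + 1) mod (n1 + n2)" "i \<noteq> (j + 1) mod (n1 + n2)"
    and "\<delta> \<in> {-1, 0, 1}"
  shows "\<not> M dvd (int i - int j + \<delta>)"
proof
  assume d: "M dvd (int i - int j + \<delta>)"
  have c1: "j \<noteq> i + 1" "\<not> (i + 1 = n1 + n2 \<and> j = 0)"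
    using assms(1,2,4) by (auto simp: mod_less)
  have c2: "i \<noteq> j + 1" "\<not> (j + 1 = n1 + n2 \<and> i = 0)"
    using assms(1,2,5) by (auto simp: mod_less)
  have "int i - int j + \<delta> = 0 \<or> \<bar>M\<bar> \<le> \<bar>int i - int j + \<delta>\<bar>"
    using dvd_imp_le_int d by blast
  thus False using assms(1,2,3,6) c1 c2 unfolding Mnat by auto
qed

lemma circle: "circle_of_tetra_on KK (n1 + n2) (\<lambda>i. tetra_faces (Q (int i * int n1)))"
  unfolding circle_of_tetra_on_def
proof (intro conjI)
  show "3 \<le> n1 + n2" using pos lt by simp
  show "KK = (\<Union>i<n1 + n2. tetra_faces (Q (int i * int n1)))"
  proof
    show "KK \<subseteq> (\<Union>i<n1 + n2. tetra_faces (Q (int i * int n1)))"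
    proof
      fix \<sigma> assume "\<sigma> \<in> KK"
      then obtain b where b: "\<sigma> \<in> tetra_faces (Q b)" using K_sub by blast
      have "Q b \<in> range Q" by simp
      hence "Q b \<in> (\<lambda>i. Q (int i * int n1)) ` {..<n1 + n2}" unfolding Q_range .
      then obtain i where i: "i < n1 + n2" "Q b = Q (int i * int n1)" by blast
      show "\<sigma> \<in> (\<Union>i<n1 + n2. tetra_faces (Q (int i * int n1)))" 
        by (rule UN_I[of i]) (use b i in auto)
    qed
    show "(\<Union>i<n1 + n2. tetra_faces (Q (int i * int n1))) \<subseteq> KK" using tf_Q_K by (simp add: UN_subset_iff)
  qed
  show "\<forall>i<n1 + n2. is_tetra_boundary (tetra_faces (Q (int i * int n1)))"
    using is_tb Q_card by blast
  show "\<exists>E. (\<forall>i<n1 + n2. finite (E i) \<and> card (E i) = 2 \<and>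
             tetra_faces (Q (int i * int n1)) \<inter> tetra_faces (Q (int ((i + 1) mod (n1 + n2)) * int n1)) =
             edge_faces (E i)) \<and>
        (\<forall>i<n1 + n2. E i \<inter> E ((i + (n1 + n2) - 1) mod (n1 + n2)) = {})"
  proof (intro exI[of _ "\<lambda>i. P (int i * int n1 + int n1)"] conjI allI impI)
    fix i assume i: "i < n1 + n2"
    show "finite (P (int i * int n1 + int n1))" "card (P (int i * int n1 + int n1)) = 2"
      using P_card by auto
    have "(int ((i + 1) mod (n1 + n2)) * int n1) mod M = (int (i + 1) * int n1) mod M"
      by (metis mod_mult_left_eq mod_nat_res)
    hence "Q (int ((i + 1) mod (n1 + n2)) * int n1) = Q (int i * int n1 + int n1)"
      by (intro Q_cong) (simp add: algebra_simps)
    thus "tetra_faces (Q (int i * int n1)) \<inter> tetra_faces (Q (int ((i + 1) mod (n1 + n2)) * int n1)) =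
             edge_faces (P (int i * int n1 + int n1))"
      by (simp add: tf_Int Q_int_next tf_edge P_card)
    have "(int ((i + (n1 + n2) - 1) mod (n1 + n2)) * int n1 + int n1) mod M
         = ((int (i + (n1 + n2) - 1) + 1) * int n1) mod M"
    proof -
      have "int ((i + (n1 + n2) - 1) mod (n1 + n2)) mod M = int (i + (n1 + n2) - 1) mod M"
        by (rule mod_nat_res)
      hence "((int ((i + (n1 + n2) - 1) mod (n1 + n2)) + 1) * int n1) mod M
         = ((int (i + (n1 + n2) - 1) + 1) * int n1) mod M" by (metis mod_add_cong mod_mult_cong)
      thus ?thesis by (simp add: distrib_right)
    qed
    also have "(int (i + (n1 + n2) - 1) + 1) * int n1 = int i * int n1 + M * int n1"
      using i by (simp add: Mnat algebra_simps of_nat_diff)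
    also have "(int i * int n1 + M * int n1) mod M = (int i * int n1) mod M" by simp
    finally have "(int i * int n1 + int n1) mod M \<noteq>
         (int ((i + (n1 + n2) - 1) mod (n1 + n2)) * int n1 + int n1) mod M"
      using R1[of "int i * int n1"] by simp
    thus "P (int i * int n1 + int n1) \<inter> P (int ((i + (n1 + n2) - 1) mod (n1 + n2)) * int n1 + int n1) = {}"
      by (rule P_disj)
  qed
  show "\<forall>i<n1 + n2. \<forall>j<n1 + n2. i \<noteq> j \<and> j \<noteq> (i + 1) mod (n1 + n2) \<and> i \<noteq> (j + 1) mod (n1 + n2) \<longrightarrow>
        tetra_faces (Q (int i * int n1)) \<inter> tetra_faces (Q (int j * int n1)) = {}"
  proof (intro allI impI)
    fix i j assume i: "i < n1 + n2" and j: "j < n1 + n2"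
      and c: "i \<noteq> j \<and> j \<noteq> (i + 1) mod (n1 + n2) \<and> i \<noteq> (j + 1) mod (n1 + n2)"
    have nd: "\<not> M dvd (int i - int j + \<delta>) * int n1" if "\<delta> \<in> {-1, 0, 1}" for \<delta>
      using nonadj[OF i j _ _ _ that] c coprime_M by (simp add: coprime_dvd_mult_left_iff)
    have "Q (int i * int n1) \<inter> Q (int j * int n1) = {}"
    proof (rule ccontr)
      assume "Q (int i * int n1) \<inter> Q (int j * int n1) \<noteq> {}"
      then obtain x where x: "x \<in> Q (int i * int n1)" "x \<in> Q (int j * int n1)" by blast
      have xi: "x mod M = (int i * int n1) mod M \<or> x mod M = (int i * int n1 + int n1) mod M"
        using x(1) by (auto simp: Q_def mem_P)
      have xj: "x mod M = (int j * int n1) mod M \<or> x mod M = (int j * int n1 + int n1) mod M"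
        using x(2) by (auto simp: Q_def mem_P)
      have e0: "int i * int n1 - int j * int n1 = (int i - int j + 0) * int n1"
        and e1: "int i * int n1 + int n1 - int j * int n1 = (int i - int j + 1) * int n1"
        and e2: "int i * int n1 - (int j * int n1 + int n1) = (int i - int j + -1) * int n1"
        and e3: "int i * int n1 + int n1 - (int j * int n1 + int n1) = (int i - int j + 0) * int n1"
        by (simp_all add: algebra_simps)
      from xi xj show False
      proof (elim disjE)
        assume "x mod M = (int i * int n1) mod M" "x mod M = (int j * int n1) mod M"
        hence "M dvd (int i * int n1 - int j * int n1)" by (metis mod_eq_dvd_iff)
        thus False using nd[of 0] e0 by simp
      next
        assume "x mod M = (int i * int n1) mod M" "x mod M = (int j * int n1 + int n1) mod M"
        hence "M dvd (int i * int n1 - (int j * int n1 + int n1))" by (metis mod_eq_dvd_iff)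
        thus False using nd[of "-1"] e2 by simp
      next
        assume "x mod M = (int i * int n1 + int n1) mod M" "x mod M = (int j * int n1) mod M"
        hence "M dvd (int i * int n1 + int n1 - int j * int n1)" by (metis mod_eq_dvd_iff)
        thus False using nd[of 1] e1 by simp
      next
        assume "x mod M = (int i * int n1 + int n1) mod M" "x mod M = (int j * int n1 + int n1) mod M"
        hence "M dvd (int i * int n1 + int n1 - (int j * int n1 + int n1))" by (metis mod_eq_dvd_iff)
        thus False using nd[of 0] e3 by simp
      qed
    qed
    thus "tetra_faces (Q (int i * int n1)) \<inter> tetra_faces (Q (int j * int n1)) = {}"
      by (simp add: tf_Int tf_empty)
  qed
qed


lemma part3:
  fixes a :: int
  defines "S \<equiv> {\<sigma> \<in> KK. card \<sigma> = 3 \<and> P a \<subseteq> \<sigma>}"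
  shows "card S = 4"
    and "S = {\<sigma>. card \<sigma> = 3 \<and> P a \<subseteq> \<sigma> \<and> (\<sigma> \<subseteq> Q a \<or> \<sigma> \<subseteq> Q (a - int n1))}"
    and "{V \<in> range Q. \<exists>\<sigma>\<in>S. \<sigma> \<subseteq> V} = {Q a, Q (a - int n1)}"
    and "tetra_faces (Q a) \<inter> tetra_faces (Q (a - int n1)) = edge_faces (P a)"
proof -
  have Qa: "Q a = P a \<union> P (a + int n1)" by (simp add: Q_def)
  have Qm: "Q (a - int n1) = P (a - int n1) \<union> P a" by (simp add: Q_def)
  have Qsup: "Q c = Q a \<or> Q c = Q (a - int n1)" if "P a \<subseteq> Q c" for c
  proof -
    from P_sub_Q[OF that] show ?thesis
    proof
      assume "a mod M = c mod M" thus ?thesis using Q_cong by metis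
    next
      assume "a mod M = (c + int n1) mod M"
      hence "(a - int n1) mod M = (c + int n1 - int n1) mod M" by (metis mod_diff_cong)
      thus ?thesis using Q_cong by (metis add_diff_cancel_right')
    qed
  qed
  have Qint: "Q a \<inter> Q (a - int n1) = P a"
    using Q_int_next[of "a - int n1"] by (simp add: Int_commute)
  show S2: "S = {\<sigma>. card \<sigma> = 3 \<and> P a \<subseteq> \<sigma> \<and> (\<sigma> \<subseteq> Q a \<or> \<sigma> \<subseteq> Q (a - int n1))}"
  proof (intro set_eqI iffI)
    fix \<sigma> assume "\<sigma> \<in> S"
    hence s: "\<sigma> \<in> KK" "card \<sigma> = 3" "P a \<subseteq> \<sigma>" by (auto simp: S_def)
    then obtain c where "\<sigma> \<subseteq> Q c" using tri_char by blast
    moreover have "Q c = Q a \<or> Q c = Q (a - int n1)" using Qsup calculation s(3) by blast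
    ultimately show "\<sigma> \<in> {\<sigma>. card \<sigma> = 3 \<and> P a \<subseteq> \<sigma> \<and> (\<sigma> \<subseteq> Q a \<or> \<sigma> \<subseteq> Q (a - int n1))}"
      using s by auto
  next
    fix \<sigma> assume "\<sigma> \<in> {\<sigma>. card \<sigma> = 3 \<and> P a \<subseteq> \<sigma> \<and> (\<sigma> \<subseteq> Q a \<or> \<sigma> \<subseteq> Q (a - int n1))}"
    hence s: "card \<sigma> = 3" "P a \<subseteq> \<sigma>" "\<exists>c. \<sigma> \<subseteq> Q c" by blast+
    thus "\<sigma> \<in> S" using tri_char by (auto simp: S_def)
  qed
  define Y where "Y = P (a + int n1) \<union> P (a - int n1)"
  have r1: "(a + int n1) mod M \<noteq> a mod M" by (rule R1)
  have r2: "(a - int n1) mod M \<noteq> a mod M" using R1[of "a - int n1"] by simp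
  have r3: "(a + int n1) mod M \<noteq> (a - int n1) mod M"
    using R2[of "a - int n1"] by (simp add: algebra_simps)
  have YP: "Y \<inter> P a = {}" unfolding Y_def using P_disj r1 r2 by blast
  have Yc: "finite Y" "card Y = 4"
    unfolding Y_def using P_card P_disj[OF r3] by (auto simp: card_Un_disjoint)
  have fPa: "finite (P a)" "card (P a) = 2" using P_card by auto
  have SY: "S = (\<lambda>y. insert y (P a)) ` Y"
  proof (intro set_eqI iffI)
    fix \<sigma> assume "\<sigma> \<in> S"
    hence s: "card \<sigma> = 3" "P a \<subseteq> \<sigma>" "\<sigma> \<subseteq> Q a \<or> \<sigma> \<subseteq> Q (a - int n1)" using S2 by auto
    have fs: "finite \<sigma>" using s(1) by (metis card.infinite zero_neq_numeral)
    have "card (\<sigma> - P a) = 1" using s(1,2) fPa by (simp add: card_Diff_subset)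
    then obtain y where y: "\<sigma> - P a = {y}" by (metis card_1_singletonE)
    hence se: "\<sigma> = insert y (P a)" using s(2) by blast
    have "y \<notin> P a" using y by blast
    moreover have "y \<in> Q a \<or> y \<in> Q (a - int n1)" using s(3) y by blast
    ultimately have "y \<in> Y" unfolding Y_def Qa Qm by blast
    thus "\<sigma> \<in> (\<lambda>y. insert y (P a)) ` Y" using se by blast
  next
    fix \<sigma> assume "\<sigma> \<in> (\<lambda>y. insert y (P a)) ` Y"
    then obtain y where y: "y \<in> Y" "\<sigma> = insert y (P a)" by blast
    have "y \<notin> P a" using y YP by blast
    hence "card \<sigma> = 3" using y(2) fPa by simp
    moreover have "\<sigma> \<subseteq> Q a \<or> \<sigma> \<subseteq> Q (a - int n1)" using y unfolding Y_def Qa Qm by blast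
    ultimately show "\<sigma> \<in> S" unfolding S2 using y by blast
  qed
  have "inj_on (\<lambda>y. insert y (P a)) Y"
  proof (rule inj_onI)
    fix y z assume "y \<in> Y" "z \<in> Y" "insert y (P a) = insert z (P a)"
    thus "y = z" using YP by blast
  qed
  thus "card S = 4" using SY Yc by (simp add: card_image)
  show "{V \<in> range Q. \<exists>\<sigma>\<in>S. \<sigma> \<subseteq> V} = {Q a, Q (a - int n1)}"
  proof (intro set_eqI iffI)
    fix V assume "V \<in> {V \<in> range Q. \<exists>\<sigma>\<in>S. \<sigma> \<subseteq> V}"
    then obtain c \<sigma> where "V = Q c" "\<sigma> \<in> S" "\<sigma> \<subseteq> V" by blast
    moreover have "P a \<subseteq> \<sigma>" using \<open>\<sigma> \<in> S\<close> by (simp add: S_def)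
    ultimately show "V \<in> {Q a, Q (a - int n1)}" using Qsup by blast
  next
    fix V assume V: "V \<in> {Q a, Q (a - int n1)}"
    have y1: "(a + int n1) mod NN \<in> Y" "(a - int n1) mod NN \<in> Y" unfolding Y_def P_eq by auto
    hence "insert ((a + int n1) mod NN) (P a) \<in> S" "insert ((a - int n1) mod NN) (P a) \<in> S"
      unfolding SY by auto
    moreover have "insert ((a + int n1) mod NN) (P a) \<subseteq> Q a"
      "insert ((a - int n1) mod NN) (P a) \<subseteq> Q (a - int n1)"
      unfolding Qa Qm P_eq by auto
    ultimately show "V \<in> {V \<in> range Q. \<exists>\<sigma>\<in>S. \<sigma> \<subseteq> V}" using V by blast
  qed
  show "tetra_faces (Q a) \<inter> tetra_faces (Q (a - int n1)) = edge_faces (P a)"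
    by (simp add: tf_Int Qint tf_edge P_card)
qed


lemma final:
  fixes N :: int and K and V1 V2 :: "int \<Rightarrow> int set" and Tets
  assumes N_def: "N = int (2 * (n1 + n2))"
  and K_def: "K = cplx n1 n2 (n1 + n2)"
  and V1_def: "V1 = (\<lambda>a::int. {a, (a + int n1) mod N, (a + int n1 + int n2) mod N,
                              (a + 2 * int n1 + int n2) mod N})"
  and V2_def: "V2 = (\<lambda>a::int. {a, (a + int n2) mod N, (a + int n1 + int n2) mod N,
                              (a + int n1 + 2 * int n2) mod N})"
  and Tets_def: "Tets = {V1 a | a. 0 \<le> a \<and> a < N} \<union> {V2 a | a. 0 \<le> a \<and> a < N}"
  shows "circle_of_tetra K (n1 + n2)
    \<and> (\<exists>T. circle_of_tetra_on K (n1 + n2) T \<and> T ` {..<n1 + n2} = tetra_faces ` Tets)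
    \<and> (\<forall>a. 0 \<le> a \<and> a < N \<longrightarrow>
         (let e = {a, (a + int n1 + int n2) mod N};
              S = {\<sigma> \<in> K. card \<sigma> = 3 \<and> e \<subseteq> \<sigma>} in
            card S = 4
          \<and> S = {\<sigma>. card \<sigma> = 3 \<and> e \<subseteq> \<sigma> \<and> (\<sigma> \<subseteq> V1 a \<or> \<sigma> \<subseteq> V2 a)}
          \<and> is_tetra_boundary (tetra_faces (V1 a)) \<and> is_tetra_boundary (tetra_faces (V2 a))
          \<and> tetra_faces (V1 a) \<subseteq> K \<and> tetra_faces (V2 a) \<subseteq> K
          \<and> {V \<in> Tets. \<exists>\<sigma>\<in>S. \<sigma> \<subseteq> V} = {V1 a, V2 a}
          \<and> tetra_faces (V1 a) \<inter> tetra_faces (V2 a) = edge_faces e))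
    \<and> (\<forall>\<sigma>\<in>K. card \<sigma> = 3 \<longrightarrow> (\<exists>!V. V \<in> Tets \<and> \<sigma> \<subseteq> V))"
proof -
  have NN: "N = NN" unfolding N_def by (simp add: NN_def M_def)
  have V1e: "V1 a = Q a" if a: "0 \<le> a" "a < N" for a
  proof -
    have r: "a mod NN = a" "a + M = a + int n1 + int n2" "a + M + int n1 = a + 2 * int n1 + int n2" "a + int n1 + int n2 + int n1 = a + 2 * int n1 + int n2"
      using a NN by (simp_all add: M_def)
    show ?thesis unfolding V1_def Q_eq NN by (simp only: r)
  qed
  have V2e: "V2 a = Q (a - int n1)" if a: "0 \<le> a" "a < N" for a
  proof -
    have r: "a - int n1 + int n1 = a" "a - int n1 + M = a + int n2" "a + int n2 + int n1 = a + int n1 + int n2"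
      "a mod NN = a"
      using a NN by (simp_all add: M_def NN_def)
    have r2: "(a + int n1 + 2 * int n2) mod NN = (a - int n1) mod NN"
      by (rule modNN) (simp add: NN_def M_def)
    have "Q (a - int n1) = {(a - int n1) mod NN, a, (a + int n2) mod NN, (a + int n1 + int n2) mod NN}"
      unfolding Q_eq by (simp only: r)
    thus ?thesis unfolding V2_def NN r2 r(4) by auto
  qed
  have Tq: "Tets = range Q"
  proof
    show "Tets \<subseteq> range Q" unfolding Tets_def using V1e V2e by auto
    show "range Q \<subseteq> Tets"
    proof
      fix V assume "V \<in> range Q"
      then obtain b where b: "V = Q b" by blast
      have "Q b = Q (b mod NN)" by (rule Q_cong) (simp add: NN_mod)
      also have "\<dots> = V1 (b mod NN)" using V1e[of "b mod NN"] modr NN by simp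
      finally show "V \<in> Tets" unfolding Tets_def using b modr NN by auto
    qed
  qed
  have KK: "K = KK" by (simp add: K_def)
  have c1: "circle_of_tetra_on K (n1 + n2) (\<lambda>i. tetra_faces (Q (int i * int n1)))"
    using circle KK by simp
  have c2: "(\<lambda>i. tetra_faces (Q (int i * int n1))) ` {..<n1 + n2} = tetra_faces ` Tets"
    unfolding Tq Q_range by (simp add: image_image)
  have c3: "\<forall>a. 0 \<le> a \<and> a < N \<longrightarrow>
         (let e = {a, (a + int n1 + int n2) mod N};
              S = {\<sigma> \<in> K. card \<sigma> = 3 \<and> e \<subseteq> \<sigma>} in
            card S = 4
          \<and> S = {\<sigma>. card \<sigma> = 3 \<and> e \<subseteq> \<sigma> \<and> (\<sigma> \<subseteq> V1 a \<or> \<sigma> \<subseteq> V2 a)}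
          \<and> is_tetra_boundary (tetra_faces (V1 a)) \<and> is_tetra_boundary (tetra_faces (V2 a))
          \<and> tetra_faces (V1 a) \<subseteq> K \<and> tetra_faces (V2 a) \<subseteq> K
          \<and> {V \<in> Tets. \<exists>\<sigma>\<in>S. \<sigma> \<subseteq> V} = {V1 a, V2 a}
          \<and> tetra_faces (V1 a) \<inter> tetra_faces (V2 a) = edge_faces e)"
  proof (intro allI impI)
    fix a :: int assume a: "0 \<le> a \<and> a < N"
    have e: "{a, (a + int n1 + int n2) mod N} = P a"
    proof -
      have "a mod NN = a" "a + M = a + int n1 + int n2" using a NN by (simp_all add: M_def)
      thus ?thesis unfolding P_eq NN by (simp add: add.assoc)
    qed
    show "let e = {a, (a + int n1 + int n2) mod N};
              S = {\<sigma> \<in> K. card \<sigma> = 3 \<and> e \<subseteq> \<sigma>} in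
            card S = 4
          \<and> S = {\<sigma>. card \<sigma> = 3 \<and> e \<subseteq> \<sigma> \<and> (\<sigma> \<subseteq> V1 a \<or> \<sigma> \<subseteq> V2 a)}
          \<and> is_tetra_boundary (tetra_faces (V1 a)) \<and> is_tetra_boundary (tetra_faces (V2 a))
          \<and> tetra_faces (V1 a) \<subseteq> K \<and> tetra_faces (V2 a) \<subseteq> K
          \<and> {V \<in> Tets. \<exists>\<sigma>\<in>S. \<sigma> \<subseteq> V} = {V1 a, V2 a}
          \<and> tetra_faces (V1 a) \<inter> tetra_faces (V2 a) = edge_faces e"
      unfolding Let_def e V1e[OF conjunct1[OF a] conjunct2[OF a]] V2e[OF conjunct1[OF a] conjunct2[OF a]] KK Tq
      using part3[of a] is_tb[OF Q_card] tf_Q_K by simp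
  qed
  have c4: "\<forall>\<sigma>\<in>K. card \<sigma> = 3 \<longrightarrow> (\<exists>!V. V \<in> Tets \<and> \<sigma> \<subseteq> V)"
    unfolding Tq KK by (intro ballI impI uniq)
  have c0: "circle_of_tetra K (n1 + n2)" unfolding circle_of_tetra_def using c1 by (rule exI[of "circle_of_tetra_on K (n1 + n2)"])
  have c12: "\<exists>T. circle_of_tetra_on K (n1 + n2) T \<and> T ` {..<n1 + n2} = tetra_faces ` Tets"
    using c1 c2 by (intro exI[of _ "\<lambda>i. tetra_faces (Q (int i * int n1))"] conjI)
  show ?thesis using c0 c12 c3 c4 by (intro conjI)
qed

end

theorem theorem6p13:
  fixes n1 n2 :: nat
  assumes "0 < n1" and "n1 < n2" and "gcd n1 n2 = 1"
  defines "N \<equiv> int (2 * (n1 + n2))"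
  defines "K \<equiv> cplx n1 n2 (n1 + n2)"
  defines "V1 \<equiv> (\<lambda>a::int. {a, (a + int n1) mod N, (a + int n1 + int n2) mod N,
                              (a + 2 * int n1 + int n2) mod N})"
  defines "V2 \<equiv> (\<lambda>a::int. {a, (a + int n2) mod N, (a + int n1 + int n2) mod N,
                              (a + int n1 + 2 * int n2) mod N})"
  defines "Tets \<equiv> {V1 a | a. 0 \<le> a \<and> a < N} \<union> {V2 a | a. 0 \<le> a \<and> a < N}"
  shows "circle_of_tetra K (n1 + n2)
    \<and> (\<exists>T. circle_of_tetra_on K (n1 + n2) T \<and> T ` {..<n1 + n2} = tetra_faces ` Tets)
    \<and> (\<forall>a. 0 \<le> a \<and> a < N \<longrightarrow>
         (let e = {a, (a + int n1 + int n2) mod N};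
              S = {\<sigma> \<in> K. card \<sigma> = 3 \<and> e \<subseteq> \<sigma>} in
            card S = 4
          \<and> S = {\<sigma>. card \<sigma> = 3 \<and> e \<subseteq> \<sigma> \<and> (\<sigma> \<subseteq> V1 a \<or> \<sigma> \<subseteq> V2 a)}
          \<and> is_tetra_boundary (tetra_faces (V1 a)) \<and> is_tetra_boundary (tetra_faces (V2 a))
          \<and> tetra_faces (V1 a) \<subseteq> K \<and> tetra_faces (V2 a) \<subseteq> K
          \<and> {V \<in> Tets. \<exists>\<sigma>\<in>S. \<sigma> \<subseteq> V} = {V1 a, V2 a}
          \<and> tetra_faces (V1 a) \<inter> tetra_faces (V2 a) = edge_faces e))
    \<and> (\<forall>\<sigma>\<in>K. card \<sigma> = 3 \<longrightarrow> (\<exists>!V. V \<in> Tets \<and> \<sigma> \<subseteq> V))"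
proof -
  interpret L n1 n2 using assms(1-3) by unfold_locales
  show ?thesis by (rule final) (simp_all add: N_def K_def V1_def V2_def Tets_def)
qed

end
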